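(* Let $x,y>0$ and $z\ge 0$ (the approximation is intended for the regime $z\ll x,y$). Let $a=(x+y)/2$ and $g=\sqrt{xy}$. Then $$R_G(x,y,z)=R_G(x,y,0)+\pi\theta z/8,$$ where $$\frac{1}{\sqrt a}\left(1-\frac4\pi\sqrt{\frac za}\right)<\theta<\left(\frac{2}{ag+g^2}\right)^{1/4}\le\frac1{\sqrt g},$$ with equality in the last inequality iff $x=y$.
   Context: For $x,y,z\ge0$ with at most one zero: $R_G(x,y,z)=\frac14\int_0^\infty[(t+x)(t+y)(t+z)]^{-1/2}\left(\frac{x}{t+x}+\frac{y}{t+y}+\frac{z}{t+z}\right)t\,dt$. *)

theory Defs
  imports "HOL-Analysis.Analysis"
begin

definition R_G :: "real \<Rightarrow> real \<Rightarrow> real \<Rightarrow> real" where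
  "R_G x y z = (1/4) * integral {0<..}
     (\<lambda>t. ((t + x) * (t + y) * (t + z)) powr (-1/2)
          * (x / (t + x) + y / (t + y) + z / (t + z)) * t)"

end

theory Submission
  imports Defs "HOL-Real_Asymp.Real_Asymp"
begin


lemma FTC_nonneg_0_inf:
  fixes f F :: "real \<Rightarrow> real"
  assumes deriv: "\<And>t. 0 < t \<Longrightarrow> (F has_real_derivative f t) (at t)"
    and cont: "\<And>t. 0 < t \<Longrightarrow> isCont f t"
    and nonneg: "\<And>t. 0 < t \<Longrightarrow> 0 \<le> f t"
    and lim0: "(F \<longlongrightarrow> A) (at_right 0)" and limi: "(F \<longlongrightarrow> B) at_top"
  shows "(f has_integral (B - A)) {0<..}"
proof -
  have 1: "set_integrable lborel (einterval 0 \<infinity>) f" "(LBINT x=0..\<infinity>. f x) = B - A"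
    by (rule interval_integral_FTC_nonneg[where F=F and A=A and B=B],
        auto simp: zero_ereal_def ereal_tendsto_simps deriv cont nonneg lim0 limi)+
  have 2: "set_integrable lborel {0<..} f" using 1(1) by (simp add: zero_ereal_def)
  have "(LBINT x=0..\<infinity>. f x) = (LINT x : {0<..} | lborel. f x)"
    using interval_integral_to_infinity_eq[where a=0 and M=lborel and f=f] by (simp add: zero_ereal_def)
  then show ?thesis using set_borel_integral_eq_integral[OF 2] 1(2)
    by (metis integrable_integral)
qed

lemma FTC_int_0_inf:
  fixes f F :: "real \<Rightarrow> real"
  assumes deriv: "\<And>t. 0 < t \<Longrightarrow> (F has_real_derivative f t) (at t)"
    and cont: "\<And>t. 0 < t \<Longrightarrow> isCont f t"
    and int: "set_integrable lborel {0<..} f"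
    and lim0: "(F \<longlongrightarrow> A) (at_right 0)" and limi: "(F \<longlongrightarrow> B) at_top"
  shows "(f has_integral (B - A)) {0<..}"
proof -
  have 1: "(LBINT x=0..\<infinity>. f x) = B - A"
    by (rule interval_integral_FTC_integrable[where F=F and A=A and B=B],
        auto simp: zero_ereal_def ereal_tendsto_simps deriv cont int lim0 limi
          has_real_derivative_iff_has_vector_derivative[symmetric])
  have "(LBINT x=0..\<infinity>. f x) = (LINT x : {0<..} | lborel. f x)"
    using interval_integral_to_infinity_eq[where a=0 and M=lborel and f=f] by (simp add: zero_ereal_def)
  then show ?thesis using set_borel_integral_eq_integral[OF int] 1
    by (metis integrable_integral)
qed


lemma sq_witness: assumes "(t::real) > 0" obtains s where "s > 0" "t = s^2" "sqrt t = s"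
  using assms by (metis real_sqrt_gt_zero real_sqrt_pow2 less_imp_le)

lemma int_D2:
  fixes m :: real assumes m: "m > 0"
  shows "((\<lambda>t. 1/(sqrt t*(t+m))) has_integral (pi/sqrt m - 0)) {0<..}"
proof (rule FTC_nonneg_0_inf)
  fix t :: real assume t: "t > 0"
  obtain s where s: "s > 0" "t = s^2" "sqrt t = s" using sq_witness[OF t] by blast
  obtain r where r: "r > 0" "m = r^2" "sqrt m = r" using sq_witness[OF m] by blast
  show "((\<lambda>t. 2/sqrt m * arctan(sqrt t/sqrt m)) has_real_derivative 1/(sqrt t*(t+m))) (at t)"
    using s r by (auto intro!: derivative_eq_intros simp: field_simps power2_eq_square add_nonneg_eq_0_iff)
  show "isCont (\<lambda>t. 1/(sqrt t*(t+m))) t" using t m by (auto intro!: continuous_intros)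
  show "0 \<le> 1/(sqrt t*(t+m))" using t m by auto
next
  show "((\<lambda>t. 2/sqrt m * arctan(sqrt t/sqrt m)) \<longlongrightarrow> 0) (at_right 0)" using m by real_asymp
  show "((\<lambda>t. 2/sqrt m * arctan(sqrt t/sqrt m)) \<longlongrightarrow> pi/sqrt m) at_top" using m by real_asymp (simp add: sqrt_def)
qed

lemma int_Phi:
  fixes g c :: real assumes g: "g > 0" and c: "c > 0"
  shows "((\<lambda>t. (t+g)/(sqrt t*((t-g)^2+4*c*t))) has_integral (pi/(2* sqrt c) - (-pi/(2* sqrt c)))) {0<..}"
proof (rule FTC_nonneg_0_inf)
  fix t :: real assume t: "t > 0"
  obtain s where s: "s > 0" "t = s^2" "sqrt t = s" using sq_witness[OF t] by blast
  obtain r where r: "r > 0" "c = r^2" "sqrt c = r" using sq_witness[OF c] by blast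
  have Dp: "(s^2-g)^2 + 4*r^2* s^2 > 0" using s r by (smt (verit) mult_pos_pos zero_le_power2 zero_less_power)
  have dY: "((\<lambda>t. (t-g)/(2* sqrt c* sqrt t)) has_real_derivative (s^2+g)/(4*r* s^3)) (at t)"
    using s r by (auto intro!: derivative_eq_intros simp: field_simps power2_eq_square power3_eq_cube)
  have c1: "((\<lambda>t. arctan((t-g)/(2* sqrt c* sqrt t))) has_real_derivative
      inverse (1 + ((t-g)/(2* sqrt c* sqrt t))^2) * ((s^2+g)/(4*r* s^3))) (at t)"
    by (rule DERIV_chain2[OF DERIV_arctan dY])
  have dA: "((\<lambda>t. arctan((t-g)/(2* sqrt c* sqrt t))/sqrt c) has_real_derivative
      inverse (1 + ((s^2-g)/(2*r* s))^2) * ((s^2+g)/(4*r* s^3)) / r) (at t)"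
    using DERIV_cdivide[OF c1, of "sqrt c"] s r by simp
  define DD where "DD = (s^2-g)^2 + 4*r^2* s^2"
  have DDp: "DD \<noteq> 0" using Dp DD_def by simp
  have e1: "1 + ((s^2-g)/(2*r* s))^2 = DD/(4*r^2* s^2)"
    unfolding DD_def using s r by (simp add: field_simps power2_eq_square)
  have e2a: "inverse (1 + ((s^2-g)/(2*r* s))^2) * ((s^2+g)/(4*r* s^3)) / r = (s^2+g)/(s*DD)"
    unfolding e1 using s r DDp by (simp add: field_simps power2_eq_square power3_eq_cube)
  have e2b: "(t+g)/(sqrt t*((t-g)^2+4*c*t)) = (s^2+g)/(s*DD)"
    unfolding DD_def s(3) using s r by (simp add: power2_eq_square mult.assoc mult.left_commute)
  have e2: "inverse (1 + ((s^2-g)/(2*r* s))^2) * ((s^2+g)/(4*r* s^3)) / r = (t+g)/(sqrt t*((t-g)^2+4*c*t))"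
    using e2a e2b by simp
  show "((\<lambda>t. arctan((t-g)/(2* sqrt c* sqrt t))/sqrt c) has_real_derivative (t+g)/(sqrt t*((t-g)^2+4*c*t))) (at t)"
    using dA unfolding e2 .
  have "(t-g)^2+4*c*t > 0" using t c by (smt (verit) mult_pos_pos zero_le_power2)
  then show "isCont (\<lambda>t. (t+g)/(sqrt t*((t-g)^2+4*c*t))) t" using t by (auto intro!: continuous_intros)
  show "0 \<le> (t+g)/(sqrt t*((t-g)^2+4*c*t))" using t g \<open>(t-g)^2+4*c*t > 0\<close> by auto
next
  have r2: "root 2 c = sqrt c" by (simp add: sqrt_def)
  show "((\<lambda>t. arctan((t-g)/(2* sqrt c* sqrt t))/sqrt c) \<longlongrightarrow> -pi/(2* sqrt c)) (at_right 0)"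
    using g c by real_asymp (simp add: r2 field_simps)
  show "((\<lambda>t. arctan((t-g)/(2* sqrt c* sqrt t))/sqrt c) \<longlongrightarrow> pi/(2* sqrt c)) at_top"
    using g c by real_asymp (simp add: r2 field_simps)
qed

lemma int_L2:
  fixes z :: real assumes z: "z > 0"
    and nn: "\<And>t. t > 0 \<Longrightarrow> 0 \<le> z/(2* sqrt t) - sqrt t + t/sqrt(t+z)"
  shows "((\<lambda>t. z/(2* sqrt t) - sqrt t + t/sqrt(t+z)) has_integral (0 - (2/3*z* sqrt z - 2*z* sqrt z))) {0<..}"
proof (rule FTC_nonneg_0_inf)
  fix t :: real assume t: "t > 0"
  obtain s where s: "s > 0" "t = s^2" "sqrt t = s" using sq_witness[OF t] by blast
  have tz: "t + z > 0" using t z by simp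
  obtain q where q: "q > 0" "t + z = q^2" "sqrt (t+z) = q" using sq_witness[OF tz] by blast
  have zq: "z = q^2 - s^2" using q s by simp
  show "((\<lambda>t. z* sqrt t - 2/3*t* sqrt t + 2/3*(t+z)* sqrt(t+z) - 2*z* sqrt(t+z)) has_real_derivative
     z/(2* sqrt t) - sqrt t + t/sqrt(t+z)) (at t)"
    using s q t tz
    apply (auto intro!: derivative_eq_intros)
    apply (simp add: field_simps)
    apply (simp add: zq power2_eq_square algebra_simps)
    done
  show "isCont (\<lambda>t. z/(2* sqrt t) - sqrt t + t/sqrt(t+z)) t" using t z by (auto intro!: continuous_intros)
  show "0 \<le> z/(2* sqrt t) - sqrt t + t/sqrt(t+z)" using nn t by auto
next
  show "((\<lambda>t. z* sqrt t - 2/3*t* sqrt t + 2/3*(t+z)* sqrt(t+z) - 2*z* sqrt(t+z)) \<longlongrightarrow> (2/3*z* sqrt z - 2*z* sqrt z)) (at_right 0)"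
    using z by real_asymp (simp add: powr_half_sqrt)
  show "((\<lambda>t. z* sqrt t - 2/3*t* sqrt t + 2/3*(t+z)* sqrt(t+z) - 2*z* sqrt(t+z)) \<longlongrightarrow> 0) at_top" using z by real_asymp
qed



lemma pw_core:
  fixes s q sP z a :: real
  assumes s: "s>0" and q: "q>0" and qz: "q^2 = s^2 + z" and z: "z>0" and sP: "sP>0" and a: "a>0"
  shows "0 \<le> s^2/(sP* s) - s^2/(sP*q)"
    and "s^2/(sP* s) - s^2/(sP*q) < z/(2* sP* s)"
    and "0 \<le> z/(2* s) - s + s^2/q"
    and "sP \<le> s^2 + a \<Longrightarrow> z/(2* s*(s^2+a)) - (z/(2* s) - s + s^2/q)/a \<le> s^2/(sP* s) - s^2/(sP*q)"
proof -
  have qs: "s < q"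
  proof (rule ccontr)
    assume "\<not> s < q"
    then have "q^2 \<le> s^2" using power_mono[of q s 2] q by simp
    then show False using qz z by simp
  qed
  define d where "d = 1/s - 1/q"
  have d1: "d = (q-s)/(s*q)" using s q by (simp add: d_def field_simps)
  have d0: "d > 0" using d1 qs s q by simp
  have zf: "z = (q-s)*(q+s)" using qz by (simp add: algebra_simps power2_eq_square)
  have den: "0 < 2* s^3" "2* s^3 < s*q*(q+s)"
  proof -
    show "0 < 2* s^3" using s by simp
    have "s*q*(q+s) - 2* s^3 = s*(q-s)*(q+2* s)" by (simp add: algebra_simps power3_eq_cube)
    also have "\<dots> > 0" using s qs by (intro mult_pos_pos) auto
    finally show "2* s^3 < s*q*(q+s)" by simp
  qed
  have dm: "d < z/(2* s^3)"
  proof -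
    have "d = (q-s)*(q+s)/(s*q*(q+s))" unfolding d1
      using nonzero_mult_divide_mult_cancel_right[of "q+s" "q-s" "s*q"] s qs by simp
    also have "\<dots> < (q-s)*(q+s)/(2* s^3)"
      using den qs s q by (intro divide_strict_left_mono) auto
    finally show ?thesis using zf by simp
  qed
  have kd: "s^2/(sP* s) - s^2/(sP*q) = s^2*d/sP" using s q sP by (simp add: d_def field_simps power2_eq_square)
  show "0 \<le> s^2/(sP* s) - s^2/(sP*q)" unfolding kd using d0 sP by simp
  have "s^2*d/sP < s^2*(z/(2* s^3))/sP"
    using mult_strict_left_mono[OF dm, of "s^2"] s sP by (intro divide_strict_right_mono) auto
  also have "\<dots> = z/(2* sP* s)" using s sP by (simp add: field_simps power2_eq_square power3_eq_cube)
  finally show "s^2/(sP* s) - s^2/(sP*q) < z/(2* sP* s)" unfolding kd .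
  have L2e: "z/(2* s) - s + s^2/q = s^2*(z/(2* s^3) - d)"
    using s q by (simp add: d_def field_simps power2_eq_square power3_eq_cube)
  show "0 \<le> z/(2* s) - s + s^2/q" unfolding L2e using dm by simp
  assume sPa: "sP \<le> s^2 + a"
  have "z/(2* s*(s^2+a)) - (z/(2* s) - s + s^2/q)/a
      = s^2*(z/(2* s^3))/(s^2+a) - s^2*(z/(2* s^3) - d)/a"
    unfolding L2e using s a by (simp add: field_simps power2_eq_square power3_eq_cube)
  also have "\<dots> \<le> s^2*(z/(2* s^3))/(s^2+a) - s^2*(z/(2* s^3) - d)/(s^2+a)"
  proof -
    have "s^2*(z/(2* s^3) - d)/(s^2+a) \<le> s^2*(z/(2* s^3) - d)/a"
      using dm s a by (intro divide_left_mono) (auto intro!: mult_pos_pos add_pos_pos)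
    then show ?thesis by simp
  qed
  also have "\<dots> = s^2*d/(s^2+a)"
  proof -
    have gen: "\<And>A X e D::real. A*X/D - A*(X-e)/D = A*e/D"
      by (simp add: diff_divide_distrib[symmetric] right_diff_distrib)
    show ?thesis by (rule gen)
  qed
  also have "\<dots> \<le> s^2*d/sP" using d0 s sP sPa by (intro divide_left_mono) (auto intro!: mult_pos_pos)
  finally show "z/(2* s*(s^2+a)) - (z/(2* s) - s + s^2/q)/a \<le> s^2/(sP* s) - s^2/(sP*q)" unfolding kd .
qed

lemma deriv_G':
  fixes x y w t :: real
  assumes "x > 0" "y > 0" "w \<ge> 0" "t > 0"
  shows "((\<lambda>t. 2*t^2 / sqrt((t+x)*(t+y)*(t+w))) has_real_derivative
    ((x/(t+x)+y/(t+y)+w/(t+w)) * t / sqrt((t+x)*(t+y)*(t+w)) + t / sqrt((t+x)*(t+y)*(t+w)))) (at t)"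
proof -
  define Q where "Q = (t+x)*(t+y)*(t+w)"
  define Q' where "Q' = (t+y)*(t+w) + (t+x)*(t+w) + (t+x)*(t+y)"
  have Qp: "Q > 0" using assms by (simp add: Q_def)
  have sq: "sqrt Q > 0" "sqrt Q * sqrt Q = Q" using Qp by auto
  have dQ: "((\<lambda>t. (t+x)*(t+y)*(t+w)) has_real_derivative Q') (at t)"
    unfolding Q'_def by (auto intro!: derivative_eq_intros simp: algebra_simps)
  have dS: "((\<lambda>t. sqrt ((t+x)*(t+y)*(t+w))) has_real_derivative (inverse (sqrt ((t+x)*(t+y)*(t+w))) / 2 * Q')) (at t)"
    by (rule DERIV_chain2[OF DERIV_real_sqrt[OF Qp[unfolded Q_def]] dQ])
  have d2: "((\<lambda>t. 2*t^2) has_real_derivative 4*t) (at t)"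
    by (auto intro!: derivative_eq_intros)
  have dd: "((\<lambda>t. 2*t^2 / sqrt((t+x)*(t+y)*(t+w))) has_real_derivative
     ((4*t * sqrt Q - 2*t^2 * (inverse (sqrt Q) / 2 * Q')) / (sqrt Q * sqrt Q))) (at t)"
    unfolding Q_def by (rule DERIV_divide[OF d2 dS]) (use Qp[unfolded Q_def] assms in auto)
  have eq: "(4*t * sqrt Q - 2*t^2 * (inverse (sqrt Q) / 2 * Q')) / (sqrt Q * sqrt Q)
      = (x/(t+x)+y/(t+y)+w/(t+w)) * t / sqrt Q + t / sqrt Q"
  proof -
    have h1: "(4*t * sqrt Q - 2*t^2 * (inverse (sqrt Q) / 2 * Q')) / (sqrt Q * sqrt Q)
        = (4*t - t^2 * Q' / Q) / sqrt Q"
      unfolding sq(2) using sq(1) Qp by (simp add: field_simps)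
    have nz: "t+x \<noteq> 0" "t+y \<noteq> 0" "t+w \<noteq> 0" using assms by auto
    have aux: "\<And>p q r::real. p \<noteq> 0 \<Longrightarrow> q \<noteq> 0 \<Longrightarrow> r \<noteq> 0 \<Longrightarrow> (q*r+p*r+p*q)/(p*q*r) = 1/p+1/q+1/r"
      by (simp add: field_simps)
    have QQ: "Q' / Q = 1/(t+x)+1/(t+y)+1/(t+w)" unfolding Q_def Q'_def by (rule aux[OF nz])
    have "4*t - t^2 * Q' / Q = 4*t - t^2 * (Q' / Q)" by simp
    also have "\<dots> = t * (x/(t+x)+y/(t+y)+w/(t+w)) + t"
    proof -
      have aux2: "\<And>p::real. p \<noteq> 0 \<Longrightarrow> t*t/p + t*(p-t)/p = t" by (simp add: field_simps)
      have i: "t*t/(t+x) + t*x/(t+x) = t" "t*t/(t+y) + t*y/(t+y) = t" "t*t/(t+w) + t*w/(t+w) = t"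
        using aux2[OF nz(1)] aux2[OF nz(2)] aux2[OF nz(3)] by simp_all
      show ?thesis unfolding QQ by (simp add: algebra_simps power2_eq_square) (use i in linarith)
    qed
    finally have h2: "4*t - t^2 * Q' / Q = t * (x/(t+x)+y/(t+y)+w/(t+w)) + t" .
    show ?thesis unfolding h1 h2 add_divide_distrib by (simp add: mult.commute)
  qed
  show ?thesis using dd[unfolded eq] unfolding Q_def .
qed



lemma dom_integrable:
  fixes f g :: "real \<Rightarrow> real"
  assumes "continuous_on {0<..} f" "\<And>t. 0 < t \<Longrightarrow> \<bar>f t\<bar> \<le> g t" "g integrable_on {0<..}"
  shows "f integrable_on {0<..}"
  by (rule measurable_bounded_by_integrable_imp_integrable[OF
      continuous_imp_measurable_on_sets_lebesgue[OF assms(1)] assms(3)]) (use assms(2) in auto)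

lemma to_lborel:
  fixes f :: "real \<Rightarrow> real"
  assumes "continuous_on {0<..} f" "f absolutely_integrable_on {0<..}"
  shows "set_integrable lborel {0<..} f"
proof -
  have m: "(\<lambda>x. indicator {0<..} x *\<^sub>R f x) \<in> borel_measurable lborel"
    using borel_measurable_continuous_on_indicator[of "{0<..}::real set" f] assms(1) by simp
  show ?thesis using assms(2) unfolding set_integrable_def
    using integrable_completion[OF m] by simp
qed

lemma strict_int:
  fixes f g :: "real \<Rightarrow> real"
  assumes cf: "continuous_on {0<..} f" and cg: "continuous_on {0<..} g"
    and fi: "f integrable_on {0<..}" and gi: "g integrable_on {0<..}"
    and lt: "\<And>t. t > 0 \<Longrightarrow> f t < g t"
  shows "integral {0<..} f < integral {0<..} g"
proof -
  define h where "h = (\<lambda>t. g t - f t)"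
  have hi: "h integrable_on {0<..}" unfolding h_def by (rule integrable_diff[OF gi fi])
  have cf2: "continuous_on {1..2} f" by (rule continuous_on_subset[OF cf]) auto
  have cg2: "continuous_on {1..2} g" by (rule continuous_on_subset[OF cg]) auto
  have hc: "continuous_on {1..2} h" unfolding h_def using cf2 cg2 by (intro continuous_intros)
  have "integral {1..2::real} (\<lambda>t. 0::real) < integral {1..2} h"
    by (rule integral_less_real) (use hc lt in \<open>auto simp: h_def\<close>)
  then have "0 < integral {1..2} h" by simp
  also have "integral {1..2} h \<le> integral {0<..} h"
  proof -
    have hi12: "h integrable_on {1..2}" by (rule integrable_on_subinterval[OF hi]) auto
    show ?thesis by (rule integral_subset_le[OF _ hi12 hi]) (auto simp: h_def less_imp_le lt)
  qed
  finally have "0 < integral {0<..} h" .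
  moreover have "integral {0<..} h = integral {0<..} g - integral {0<..} f"
    unfolding h_def by (rule integral_diff[OF gi fi])
  ultimately show ?thesis by simp
qed

lemma powr_mhalf: "(Q::real) > 0 \<Longrightarrow> Q powr (-1/2) = 1 / sqrt Q"
proof -
  assume Qp: "Q > 0"
  have "Q powr (-1/2) = Q powr (-(1/2))" by simp
  also have "\<dots> = inverse (Q powr (1/2))" by (rule powr_minus)
  also have "\<dots> = 1 / sqrt Q" using Qp by (metis powr_half_sqrt less_imp_le inverse_eq_divide)
  finally show ?thesis .
qed

lemma frac_diff_aux:
  fixes N D p s :: real
  assumes "s > 0" "D > 0" "p > 0"
  shows "N/(s*D) - 1/(p* s) = (N*p - D)/(s*D*p)"
  using assms by (simp add: field_simps)

theorem mainTheorem17: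
  fixes x y z :: real
  assumes "x > 0" and "y > 0" and "z > 0"
  defines "a \<equiv> (x + y) / 2" and "g \<equiv> sqrt (x * y)"
  shows "(\<exists>\<theta>. R_G x y z = R_G x y 0 + pi * \<theta> * z / 8
              \<and> 1 / sqrt a * (1 - 4 / pi * sqrt (z / a)) < \<theta>
              \<and> \<theta> < (2 / (a * g + g^2)) powr (1/4))
         \<and> (2 / (a * g + g^2)) powr (1/4) \<le> 1 / sqrt g
         \<and> ((2 / (a * g + g^2)) powr (1/4) = 1 / sqrt g \<longleftrightarrow> x = y)"
proof -
  have x: "x > 0" and y: "y > 0" and z: "z > 0" using assms by auto
  define Q where "Q = (\<lambda>w t. (t+x)*(t+y)*(t+w))"
  define F where "F = (\<lambda>w t. (x/(t+x)+y/(t+y)+w/(t+w)) * t / sqrt (Q w t))"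
  define k where "k = (\<lambda>t. t / sqrt (Q 0 t) - t / sqrt (Q z t))"
  define m0 where "m0 = min x y"
  define c where "c = sqrt ((a*g+g^2)/2)"
  define al where "al = (a+g)/2"
  define U where "U = (2 / (a * g + g^2)) powr (1/4)"
  define sP where "sP = (\<lambda>t. sqrt ((t+x)*(t+y)))"
  have a0: "a > 0" using x y by (simp add: a_def)
  have g0: "g > 0" using x y by (simp add: g_def)
  have m00: "m0 > 0" using x y by (simp add: m0_def)
  have gg: "g^2 = x*y" using x y by (simp add: g_def)
  have ag2: "a^2 - g^2 = ((x-y)/2)^2" unfolding gg a_def by (simp add: power2_eq_square field_simps; simp add: algebra_simps)
  have ga: "g \<le> a"
  proof -
    have "g^2 \<le> a^2" using ag2 by (smt (verit) zero_le_power2)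
    then show ?thesis using a0 by (metis power2_le_imp_le less_imp_le add_pos_pos)
  qed
  have c0: "c > 0" using a0 g0 by (simp add: c_def add_pos_pos)
  have cc: "c^2 = (a*g+g^2)/2" using a0 g0 unfolding c_def by (intro real_sqrt_pow2) simp
  have cal: "c^2 = al*g" unfolding cc al_def by (simp add: power2_eq_square algebra_simps)
  have c2: "2*c \<le> al + g"
  proof -
    have "(al+g)^2 - (2*c)^2 = (al-g)^2" unfolding power_mult_distrib cal by (simp add: power2_eq_square algebra_simps)
    then have h: "(2*c)^2 \<le> (al+g)^2" by (smt (verit) zero_le_power2)
    have "0 \<le> al + g" using g0 a0 by (simp add: al_def)
    then show ?thesis using h power2_le_imp_le by blast
  qed
  have sP0: "sP t > 0" if "t > 0" for t using that x y by (simp add: sP_def)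
  have sPlo: "t + m0 \<le> sP t" if t: "t > 0" for t
  proof -
    have "(t+m0)*(t+m0) \<le> (t+x)*(t+y)" using t x y by (intro mult_mono) (auto simp: m0_def)
    then show ?thesis unfolding sP_def by (intro real_le_rsqrt) (simp add: power2_eq_square)
  qed
  have sPhi: "sP t \<le> t + a" if t: "t > 0" for t
  proof -
    have "(t+a)^2 - (t+x)*(t+y) = a^2 - g^2" unfolding gg a_def by (simp add: power2_eq_square field_simps; simp add: algebra_simps)
    then have "(t+x)*(t+y) \<le> (t+a)^2" using ga g0 by (smt (verit) ag2 zero_le_power2)
    then have "sqrt ((t+x)*(t+y)) \<le> sqrt ((t+a)^2)" by (rule real_sqrt_le_mono)
    then show ?thesis unfolding sP_def using t a0 by simp
  qed
  have sQ: "sqrt (Q w t) = sP t * sqrt (t + w)" for w t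
    unfolding Q_def sP_def by (simp add: real_sqrt_mult)
  have landen: "(t-g)^2 + 4*c*t \<le> (t+g) * sP t" if t: "t > 0" for t
  proof -
    define E where "E = (t-g)^2"
    have E0: "E \<ge> 0" by (simp add: E_def)
    have P1: "(t+x)*(t+y) = E + 4*al*t" unfolding E_def al_def a_def
      using gg by (simp add: power2_eq_square field_simps; simp add: algebra_simps)
    have P2: "(t+g)^2 = E + 4*g*t" unfolding E_def by (simp add: power2_eq_square algebra_simps)
    have "(E + 4*al*t)*(E + 4*g*t) - (E + 4*c*t)^2 = 4*t*E*(al+g-2*c) + 16*t^2*(al*g - c^2)"
      by (simp add: power2_eq_square algebra_simps)
    also have "\<dots> = 4*t*E*(al+g-2*c)" using cal by simp
    also have "\<dots> \<ge> 0" using t E0 c2 by simp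
    finally have "(E + 4*c*t)^2 \<le> (E + 4*al*t)*(E + 4*g*t)" by simp
    then have "E + 4*c*t \<le> sqrt ((E + 4*al*t)*(E + 4*g*t))" by (intro real_le_rsqrt)
    also have "\<dots> = sP t * (t+g)" unfolding sP_def P1[symmetric] P2[symmetric] real_sqrt_mult
      using t g0 by simp
    finally show ?thesis unfolding E_def by (simp add: mult.commute)
  qed
  define Uf where "Uf = (\<lambda>t. z/2 * ((t+g)/(sqrt t*((t-g)^2+4*c*t))))"
  define L where "L = (\<lambda>t. z/2 * (1/(sqrt t*(t+a))) - (1/a) * (z/(2* sqrt t) - sqrt t + t/sqrt(t+z)))"
  have kpw: "0 \<le> k t \<and> k t < Uf t \<and> L t \<le> k t \<and> 0 \<le> z/(2* sqrt t) - sqrt t + t/sqrt(t+z)" if t: "t > 0" for t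
  proof -
    obtain s where s: "s > 0" "t = s^2" "sqrt t = s" using sq_witness[OF t] by blast
    have tz: "t + z > 0" using t z by simp
    obtain q where q: "q > 0" "t + z = q^2" "sqrt (t+z) = q" using sq_witness[OF tz] by blast
    have qz: "q^2 = s^2 + z" using q s by simp
    have ke: "k t = s^2/(sP t * s) - s^2/(sP t * q)"
      unfolding k_def sQ using s q by simp
    note pc = pw_core[OF s(1) q(1) qz z sP0[OF t] a0]
    have D0: "(t-g)^2+4*c*t > 0" using t c0 by (smt (verit) mult_pos_pos zero_le_power2)
    have "z/(2* sP t * s) \<le> Uf t"
    proof -
      have "(t+g)/(s*((t-g)^2+4*c*t)) - 1/(sP t * s) = ((t+g)* sP t - ((t-g)^2+4*c*t))/(s*((t-g)^2+4*c*t)* sP t)"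
        by (rule frac_diff_aux) (use s(1) sP0[OF t] D0 in auto)
      also have "\<dots> \<ge> 0" using landen[OF t] s sP0[OF t] D0 by (intro divide_nonneg_pos) auto
      finally have "1/(sP t * s) \<le> (t+g)/(s*((t-g)^2+4*c*t))" by simp
      then have "z/2 * (1/(sP t * s)) \<le> z/2 * ((t+g)/(s*((t-g)^2+4*c*t)))" using z by (intro mult_left_mono) auto
      then show ?thesis unfolding Uf_def s(3) by simp
    qed
    moreover have "L t = z/(2* s*(s^2+a)) - (z/(2* s) - s + s^2/q)/a"
      unfolding L_def s(3) q(3) using s by simp
    moreover have "z/(2* sqrt t) - sqrt t + t/sqrt(t+z) = z/(2* s) - s + s^2/q" unfolding s(3) q(3) using s by simp
    moreover have "sP t \<le> s^2 + a" using sPhi[OF t] s by simp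
    ultimately show ?thesis using pc unfolding ke by auto
  qed
  have Qpos: "Q w t > 0" if "t > 0" "w \<ge> 0" for w t using that x y by (simp add: Q_def)
  have contk: "continuous_on {0<..} k" unfolding k_def Q_def
    by (intro continuous_intros) (use x y z in auto)
  have contF: "continuous_on {0<..} (F w)" if "w \<ge> 0" for w unfolding F_def Q_def
    using that x y by (intro continuous_intros) auto
  have contUf: "continuous_on {0<..} Uf" unfolding Uf_def
  proof (intro continuous_intros ballI)
    fix t :: real assume "t \<in> {0<..}"
    then have t: "t > 0" by simp
    have "(t-g)^2+4*c*t > 0" using t c0 by (smt (verit) mult_pos_pos zero_le_power2)
    then show "sqrt t * ((t - g)\<^sup>2 + 4 * c * t) \<noteq> 0" using t by simp
  qed
  have hUf: "(Uf has_integral (z/2 * (pi/(2* sqrt c) - (-pi/(2* sqrt c))))) {0<..}"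
    unfolding Uf_def by (rule has_integral_mult_right[OF int_Phi[OF g0 c0]])
  have hL2: "((\<lambda>t. z/(2* sqrt t) - sqrt t + t/sqrt(t+z)) has_integral (0 - (2/3*z* sqrt z - 2*z* sqrt z))) {0<..}"
    by (rule int_L2[OF z]) (use kpw in auto)
  have hL: "(L has_integral (z/2 * (pi/sqrt a - 0) - (1/a) * (0 - (2/3*z* sqrt z - 2*z* sqrt z)))) {0<..}"
    unfolding L_def by (intro has_integral_diff has_integral_mult_right int_D2 a0 hL2)
  have ki: "k integrable_on {0<..}"
    by (rule dom_integrable[OF contk _ has_integral_integrable[OF hUf]]) (use kpw in \<open>auto simp: less_imp_le\<close>)
  have Fbound: "\<bar>F w t\<bar> \<le> (x+y+w) * (1/(sqrt t*(t+m0)))" "0 \<le> F w t" if t: "t > 0" and w: "w \<ge> 0" for w t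
  proof -
    have N0: "0 \<le> (x/(t+x)+y/(t+y)+w/(t+w)) * t" using t x y w by simp
    have N1: "(x/(t+x)+y/(t+y)+w/(t+w)) * t \<le> x + y + w"
    proof -
      have "x/(t+x)*t \<le> x" using t x by (simp add: field_simps)
      moreover have "y/(t+y)*t \<le> y" using t y by (simp add: field_simps)
      moreover have "w/(t+w)*t \<le> w" using t w by (simp add: field_simps)
      ultimately show ?thesis by (simp add: distrib_right)
    qed
    have Dl: "(t+m0) * sqrt t \<le> sqrt (Q w t)"
    proof -
      have "sqrt t \<le> sqrt (t+w)" using w by simp
      then show ?thesis unfolding sQ using sPlo[OF t] t m00
        by (intro mult_mono) auto
    qed
    have Dp: "0 < (t+m0) * sqrt t" using t m00 by simp
    have "F w t \<le> (x+y+w) / ((t+m0) * sqrt t)"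
      unfolding F_def by (rule frac_le) (use N0 N1 Dl Dp in auto)
    then show "\<bar>F w t\<bar> \<le> (x+y+w) * (1/(sqrt t*(t+m0)))" using N0 Qpos[OF t w]
      by (simp add: F_def mult.commute)
    show "0 \<le> F w t" unfolding F_def using N0 Qpos[OF t w] by simp
  qed
  have Fi: "F w integrable_on {0<..}" if w: "w \<ge> 0" for w
    by (rule dom_integrable[OF contF[OF w] _ integrable_on_cmult_left[OF has_integral_integrable[OF int_D2[OF m00]]]])
       (use Fbound w in auto)
  have RG: "R_G x y w = 1/4 * integral {0<..} (F w)" if w: "w \<ge> 0" for w
    unfolding R_G_def
  proof (intro arg_cong[where f="\<lambda>u. 1/4 * u"] integral_cong)
    fix t :: real assume "t \<in> {0<..}"
    then have t: "t > 0" by simp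
    show "((t + x) * (t + y) * (t + w)) powr (-1/2) * (x/(t+x)+y/(t+y)+w/(t+w)) * t = F w t"
      unfolding F_def Q_def using powr_mhalf[OF Qpos[OF t w, unfolded Q_def]] by simp
  qed
  \<comment> \<open>integration by parts identity\<close>
  define B where "B = (\<lambda>t::real. 2*t^2 / sqrt((t+x)*(t+y)*(t+z)) - 2*t^2 / sqrt((t+x)*(t+y)*(t+0)))"
  have hB: "((\<lambda>t. F z t - F 0 t - k t) has_integral (0 - 0)) {0<..}"
  proof (rule FTC_int_0_inf[where F=B])
    fix t :: real assume t: "t > 0"
    have "(B has_real_derivative
      (((x/(t+x)+y/(t+y)+z/(t+z)) * t / sqrt((t+x)*(t+y)*(t+z)) + t / sqrt((t+x)*(t+y)*(t+z)))
       - ((x/(t+x)+y/(t+y)+0/(t+0)) * t / sqrt((t+x)*(t+y)*(t+0)) + t / sqrt((t+x)*(t+y)*(t+0))))) (at t)"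
      unfolding B_def by (rule DERIV_diff[OF deriv_G'[OF x y _ t] deriv_G'[OF x y _ t]]) (use z in auto)
    then show "(B has_real_derivative F z t - F 0 t - k t) (at t)"
      unfolding F_def k_def Q_def by (simp add: algebra_simps)
    show "isCont (\<lambda>t. F z t - F 0 t - k t) t"
      using t x y z unfolding F_def k_def Q_def by (intro continuous_intros) auto
  next
    have "set_integrable lebesgue {0<..} (\<lambda>t. F z t - F 0 t - k t)"
      by (intro set_integral_diff(1) nonnegative_absolutely_integrable_1 Fi ki)
         (use Fbound kpw z in \<open>auto\<close>)
    moreover have "continuous_on {0<..} (\<lambda>t. F z t - F 0 t - k t)"
      using contF[of z] contF[of 0] contk z by (intro continuous_intros) auto
    ultimately show "set_integrable lborel {0<..} (\<lambda>t. F z t - F 0 t - k t)"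
      using to_lborel by blast
  next
    have "B = (\<lambda>t::real. 2*t^2 / sqrt((t+x)*(t+y)*(t+z)) - 2*t^2 / sqrt((t+x)*(t+y)*t))"
      unfolding B_def by simp
    moreover have "((\<lambda>t::real. 2*t^2 / sqrt((t+x)*(t+y)*(t+z)) - 2*t^2 / sqrt((t+x)*(t+y)*t)) \<longlongrightarrow> 0) (at_right 0)"
      using x y z by real_asymp
    moreover have "((\<lambda>t::real. 2*t^2 / sqrt((t+x)*(t+y)*(t+z)) - 2*t^2 / sqrt((t+x)*(t+y)*t)) \<longlongrightarrow> 0) at_top"
      using x y z by real_asymp
    ultimately show "(B \<longlongrightarrow> 0) (at_right 0)" "(B \<longlongrightarrow> 0) at_top" by simp_all
  qed
  have Ieq: "integral {0<..} (F z) - integral {0<..} (F 0) = integral {0<..} k"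
  proof -
    have "integral {0<..} (\<lambda>t. F z t - F 0 t - k t) = 0" using hB by (simp add: integral_unique)
    moreover have "integral {0<..} (\<lambda>t. F z t - F 0 t - k t) = integral {0<..} (F z) - integral {0<..} (F 0) - integral {0<..} k"
      using Fi[of z] Fi[of 0] ki z
      by (simp add: integral_diff integrable_diff)
    ultimately show ?thesis by simp
  qed
  define I where "I = integral {0<..} k"
  have Iup: "I < z * pi / (2 * sqrt c)"
  proof -
    have "I < integral {0<..} Uf" unfolding I_def
      by (rule strict_int[OF contk contUf ki has_integral_integrable[OF hUf]]) (use kpw in auto)
    also have "integral {0<..} Uf = z * pi / (2 * sqrt c)" using integral_unique[OF hUf] by (simp add: field_simps)
    finally show ?thesis .
  qed
  have Ilo: "z * pi / (2 * sqrt a) - 4/3 * z * sqrt z / a \<le> I"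
  proof -
    have "integral {0<..} L \<le> I" unfolding I_def
      by (rule integral_le[OF has_integral_integrable[OF hL] ki]) (use kpw in auto)
    moreover have "integral {0<..} L = z * pi / (2 * sqrt a) - 4/3 * z * sqrt z / a"
      using integral_unique[OF hL] by (simp add: field_simps)
    ultimately show ?thesis by simp
  qed
  have RGd: "R_G x y z - R_G x y 0 = I / 4"
    using RG[of z] RG[of 0] z Ieq unfolding I_def by simp
  have U_eq: "U = 1 / sqrt c"
  proof -
    define q where "q = 2 / (a * g + g^2)"
    have q0: "q > 0" using a0 g0 by (simp add: q_def add_pos_pos)
    have U0: "U > 0" unfolding U_def q_def[symmetric] using q0 by simp
    have "U^4 = U powr (real 4)" using U0 by (simp add: powr_realpow)
    also have "\<dots> = q powr (1/4 * 4)" unfolding U_def q_def[symmetric] by (simp add: powr_powr)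
    also have "\<dots> = q" using q0 by simp
    finally have U4: "U^4 = q" .
    have s4: "(sqrt c)^4 = c^2" using c0 power_mult[of "sqrt c" 2 2] by simp
    have "(1 / sqrt c)^4 = 1 / c^2" using s4 by (simp add: power_divide)
    also have "\<dots> = q" unfolding cc q_def by (simp add: power2_eq_square)
    finally have "(1/sqrt c)^4 = q" .
    then have h4: "(1/sqrt c)^4 = U^4" using U4 by simp
    have "1/sqrt c = U" by (rule power_eq_imp_eq_base[OF h4]) (use U0 c0 in auto)
    then show ?thesis by simp
  qed
  have part1: "\<exists>\<theta>. R_G x y z = R_G x y 0 + pi * \<theta> * z / 8
              \<and> 1 / sqrt a * (1 - 4 / pi * sqrt (z / a)) < \<theta>
              \<and> \<theta> < U"
  proof (intro exI conjI)
    show "R_G x y z = R_G x y 0 + pi * (2*I/(pi*z)) * z / 8" using RGd z by (simp add: field_simps)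
    show "2*I/(pi*z) < U" unfolding U_eq
    proof -
      have "2*I/(pi*z) < 2*(z * pi / (2 * sqrt c))/(pi*z)" using Iup z c0 by (intro divide_strict_right_mono) (auto simp: field_simps)
      also have "\<dots> = 1 / sqrt c" using z by (simp add: field_simps)
      finally show "2*I/(pi*z) < 1 / sqrt c" .
    qed
    show "1 / sqrt a * (1 - 4 / pi * sqrt (z / a)) < 2*I/(pi*z)"
    proof -
      obtain sa where sa: "sa > 0" "a = sa^2" "sqrt a = sa" using sq_witness[OF a0] by blast
      obtain sz where sz: "sz > 0" "z = sz^2" "sqrt z = sz" using sq_witness[OF z] by blast
      have e1: "1 / sqrt a * (1 - 4 / pi * sqrt (z / a)) = 1/sa - 4* sz/(pi* sa^2)"
        unfolding real_sqrt_divide sa(3) sz(3) using sa by (simp add: field_simps power2_eq_square)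
      have e2: "2*(z * pi / (2 * sqrt a) - 4/3 * z * sqrt z / a)/(pi*z) = 1/sa - 8* sz/(3*pi* sa^2)"
        unfolding sa(3) sz(3) using sa sz by (simp add: field_simps power2_eq_square)
      have "1/sa - 4* sz/(pi* sa^2) < 1/sa - 8* sz/(3*pi* sa^2)"
        using sa sz by (simp add: field_simps)
      also have "\<dots> \<le> 2*I/(pi*z)"
      proof -
        have Ilo2: "2*(z * pi / (2 * sqrt a) - 4/3 * z * sqrt z / a) \<le> 2*I" by (rule mult_left_mono[OF Ilo]) simp
        show ?thesis unfolding e2[symmetric] by (rule divide_right_mono[OF Ilo2]) (use z in simp)
      qed
      finally show ?thesis unfolding e1 .
    qed
  qed
  have part2: "U \<le> 1 / sqrt g"
  proof -
    have "g^2 \<le> c^2" unfolding cc using ga g0 by (simp add: power2_eq_square)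
    then have "g \<le> c" using c0 by (metis power2_le_imp_le less_imp_le add_pos_pos)
    then show ?thesis unfolding U_eq using g0 by (simp add: frac_le)
  qed
  have part3: "U = 1 / sqrt g \<longleftrightarrow> x = y"
  proof
    assume "U = 1 / sqrt g"
    then have "sqrt c = sqrt g" unfolding U_eq using c0 g0 by simp
    then have "c = g" by simp
    then have "c^2 = g^2" by simp
    then have "a = g" unfolding cc using g0 by (simp add: power2_eq_square field_simps)
    then have "((x-y)/2)^2 = 0" using ag2 by simp
    then show "x = y" by simp
  next
    assume xy: "x = y"
    have "g = a" unfolding g_def a_def xy using y by simp
    then have "c^2 = g^2" unfolding cc by (simp add: power2_eq_square)
    then have "c = g" using c0 g0 by (simp add: power2_eq_iff_nonneg)
    then show "U = 1 / sqrt g" unfolding U_eq by simp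
  qed
  show ?thesis using part1 part2 part3 unfolding U_def by blast
qed

end
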